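(* Let $E$ be an sc-Banach space and let $V$ be a partial quadrant in a finite-dimensional real vector space. Let $f:\mathcal O(V\oplus E,0)\to (E,0)$ be an $\mathrm{sc}^0$-contraction germ. Then there exists a uniquely determined $\mathrm{sc}^0$-germ $\delta:\mathcal O(V,0)\to (E,0)$ such that the graph germ $\mathrm{gr}(\delta):v\mapsto (v,\delta(v))$ satisfies $f\circ \mathrm{gr}(\delta)=0$, i.e. $f(v,\delta(v))=0$ for all $v$ near $0$.
   Context: An sc-Banach space is a Banach space $E$ together with a nested sequence of Banach spaces $E=E_0\supset E_1\supset E_2\supset\cdots$ such that for $m<n$ the inclusion $E_n\to E_m$ is a compact operator and $E_\infty=\bigcap_m E_m$ is dense in every $E_m$; $\|\cdot\|_m$ is the norm of $E_m$. A finite-dimensional space carries the constant structure $E_m=E$, and direct sums carry the levelwise structure $(E\oplus F)_m=E_m\oplus F_m$. A partial quadrant in a finite-dimensional space $F$ is a set $L([0,\infty)^k\oplus\mathbb R^{n-k})$ for a linear isomorphism $L:\mathbb R^n\to F$. For a closed subset $C$ of an sc-Banach space, $C_m=C\cap E_m$. A germ of neighborhoods $\mathcal O(C,0)$ is a decreasing sequence $U_0\supset U_1\supset\cdots$ where $U_m$ is a relatively open neighborhood of $0$ in $C_m$ (topology of $E_m$); germs are identified when they agree after shrinking these neighborhoods. An $\mathrm{sc}^0$-germ $f:\mathcal O(C,0)\to(F,0)$ into an sc-Banach space $F$ is a continuous map $f:U_0\to F_0$ with $f(0)=0$, $f(U_m)\subset F_m$ and $f:U_m\to F_m$ continuous for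 every $m$. An $\mathrm{sc}^0$-contraction germ is an $\mathrm{sc}^0$-germ $f:\mathcal O(V\oplus E,0)\to(E,0)$ of the form $f(v,u)=u-B(v,u)$ such that for every level $m\ge 0$ and every $0<\varepsilon<1$ one has $\|B(v,u)-B(v,u')\|_m\le\varepsilon\|u-u'\|_m$ for all $(v,u),(v,u')$ in some neighborhood of $(0,0)$ in $V\oplus E_m$ (depending on $m$ and $\varepsilon$). *)

theory Defs
  imports "HOL-Analysis.Analysis"
begin

definition sc_banach :: "(nat \<Rightarrow> 'e::banach set) \<Rightarrow> (nat \<Rightarrow> 'e \<Rightarrow> real) \<Rightarrow> bool" where
  "sc_banach El nm \<longleftrightarrow>
     El 0 = UNIV \<and> (\<forall>x. nm 0 x = norm x) \<and>
     (\<forall>m. El (Suc m) \<subseteq> El m) \<and>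
     (\<forall>m. subspace (El m)) \<and>
     (\<forall>m. \<forall>x\<in>El m. 0 \<le> nm m x \<and> (nm m x = 0 \<longleftrightarrow> x = 0)) \<and>
     (\<forall>m. \<forall>x\<in>El m. \<forall>y\<in>El m. nm m (x + y) \<le> nm m x + nm m y) \<and>
     (\<forall>m. \<forall>x\<in>El m. \<forall>c::real. nm m (c *\<^sub>R x) = \<bar>c\<bar> * nm m x) \<and>
     (\<forall>m (s::nat \<Rightarrow> 'e). (\<forall>k. s k \<in> El m) \<and>
            (\<forall>e>0. \<exists>N. \<forall>i\<ge>N. \<forall>j\<ge>N. nm m (s i - s j) < e)
            \<longrightarrow> (\<exists>l\<in>El m. (\<lambda>k. nm m (s k - l)) \<longlonglongrightarrow> 0)) \<and>
     (\<forall>m n (s::nat \<Rightarrow> 'e). m < n \<and> (\<forall>k. s k \<in> El n) \<and> (\<exists>M. \<forall>k. nm n (s k) \<le> M)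
            \<longrightarrow> (\<exists>(r::nat \<Rightarrow> nat) l. strict_mono r \<and> l \<in> El m \<and> (\<lambda>k. nm m (s (r k) - l)) \<longlonglongrightarrow> 0)) \<and>
     (\<forall>m. \<forall>x\<in>El m. \<forall>e>0. \<exists>y\<in>(\<Inter>k. El k). nm m (y - x) < e)"

definition partial_quadrant :: "'v::euclidean_space set \<Rightarrow> bool" where
  "partial_quadrant V \<longleftrightarrow>
     (\<exists>L B. linear L \<and> bij (L :: 'v \<Rightarrow> 'v) \<and> B \<subseteq> Basis \<and> V = L ` {x. \<forall>b\<in>B. 0 \<le> x \<bullet> b})"

definition rel_open_nbhd0 :: "'a::ab_group_add set \<Rightarrow> ('a \<Rightarrow> real) \<Rightarrow> 'a set \<Rightarrow> bool" where
  "rel_open_nbhd0 C n U \<longleftrightarrow> U \<subseteq> C \<and> 0 \<in> U \<and>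
     (\<forall>x\<in>U. \<exists>e>0. \<forall>y\<in>C. n (y - x) < e \<longrightarrow> y \<in> U)"

definition cont_lev :: "'a::ab_group_add set \<Rightarrow> ('a \<Rightarrow> real) \<Rightarrow> ('b::ab_group_add \<Rightarrow> real) \<Rightarrow> ('a \<Rightarrow> 'b) \<Rightarrow> bool" where
  "cont_lev U dn fn g \<longleftrightarrow> (\<forall>x\<in>U. \<forall>e>0. \<exists>d>0. \<forall>y\<in>U. dn (y - x) < d \<longrightarrow> fn (g y - g x) < e)"

text \<open>sc0-germ represented by a decreasing sequence of neighbourhoods U and a map g.\<close>
definition sc0_germ ::
  "(nat \<Rightarrow> 'a::ab_group_add set) \<Rightarrow> (nat \<Rightarrow> 'a \<Rightarrow> real) \<Rightarrow> (nat \<Rightarrow> 'b::ab_group_add set) \<Rightarrow> (nat \<Rightarrow> 'b \<Rightarrow> real)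
    \<Rightarrow> (nat \<Rightarrow> 'a set) \<Rightarrow> ('a \<Rightarrow> 'b) \<Rightarrow> bool" where
  "sc0_germ Cl dn Fl fn U g \<longleftrightarrow>
     (\<forall>m. rel_open_nbhd0 (Cl m) (dn m) (U m)) \<and> (\<forall>m. U (Suc m) \<subseteq> U m) \<and>
     g 0 = 0 \<and> (\<forall>m. g ` U m \<subseteq> Fl m) \<and> (\<forall>m. cont_lev (U m) (dn m) (fn m) g)"

definition sum_levels :: "'v set \<Rightarrow> (nat \<Rightarrow> 'e set) \<Rightarrow> nat \<Rightarrow> ('v \<times> 'e) set" where
  "sum_levels V El m = V \<times> El m"

definition sum_norms :: "(nat \<Rightarrow> 'e \<Rightarrow> real) \<Rightarrow> nat \<Rightarrow> ('v::real_normed_vector \<times> 'e) \<Rightarrow> real" where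
  "sum_norms nm m p = norm (fst p) + nm m (snd p)"

definition sc0_contraction_germ ::
  "'v::euclidean_space set \<Rightarrow> (nat \<Rightarrow> 'e::banach set) \<Rightarrow> (nat \<Rightarrow> 'e \<Rightarrow> real)
    \<Rightarrow> (nat \<Rightarrow> ('v \<times> 'e) set) \<Rightarrow> ('v \<times> 'e \<Rightarrow> 'e) \<Rightarrow> bool" where
  "sc0_contraction_germ V El nm U f \<longleftrightarrow>
     sc0_germ (sum_levels V El) (sum_norms nm) El nm U f \<and>
     (\<forall>m. \<forall>\<epsilon>::real. 0 < \<epsilon> \<and> \<epsilon> < 1 \<longrightarrow>
        (\<exists>r>0. \<forall>v\<in>V. \<forall>u\<in>El m. \<forall>u'\<in>El m.
            norm v < r \<and> nm m u < r \<and> nm m u' < r \<longrightarrow>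
            (v, u) \<in> U m \<and> (v, u') \<in> U m \<and>
            nm m ((u - f (v, u)) - (u' - f (v, u'))) \<le> \<epsilon> * nm m (u - u')))"

definition solves_germ ::
  "'v::euclidean_space set \<Rightarrow> (nat \<Rightarrow> ('v \<times> 'e::banach) set) \<Rightarrow> ('v \<times> 'e \<Rightarrow> 'e) \<Rightarrow> (nat \<Rightarrow> 'v set) \<Rightarrow> ('v \<Rightarrow> 'e) \<Rightarrow> bool" where
  "solves_germ V Uf f Ud d \<longleftrightarrow>
     (\<exists>W. rel_open_nbhd0 V norm W \<and> W \<subseteq> Ud 0 \<and> (\<forall>v\<in>W. (v, d v) \<in> Uf 0 \<and> f (v, d v) = 0))"

definition germ_eq :: "'v::euclidean_space set \<Rightarrow> (nat \<Rightarrow> 'v set) \<Rightarrow> ('v \<Rightarrow> 'e) \<Rightarrow> (nat \<Rightarrow> 'v set) \<Rightarrow> ('v \<Rightarrow> 'e) \<Rightarrow> bool" where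
  "germ_eq V U1 g1 U2 g2 \<longleftrightarrow>
     (\<exists>W. rel_open_nbhd0 V norm W \<and> W \<subseteq> U1 0 \<and> W \<subseteq> U2 0 \<and> (\<forall>v\<in>W. g1 v = g2 v))"

end

theory Submission
  imports Defs
begin


definition normlike :: "'e::real_vector set \<Rightarrow> ('e \<Rightarrow> real) \<Rightarrow> bool" where
  "normlike S N \<longleftrightarrow> subspace S \<and> (\<forall>x\<in>S. 0 \<le> N x \<and> (N x = 0 \<longleftrightarrow> x = 0)) \<and>
     (\<forall>x\<in>S. \<forall>y\<in>S. N (x + y) \<le> N x + N y) \<and> (\<forall>x\<in>S. \<forall>c::real. N (c *\<^sub>R x) = \<bar>c\<bar> * N x)"

lemma nl_zero: "normlike S N \<Longrightarrow> N 0 = 0"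
  unfolding normlike_def using subspace_0 by blast

lemma nl_nonneg: "normlike S N \<Longrightarrow> x \<in> S \<Longrightarrow> 0 \<le> N x"
  unfolding normlike_def by blast

lemma nl_eq0: "normlike S N \<Longrightarrow> x \<in> S \<Longrightarrow> N x = 0 \<Longrightarrow> x = 0"
  unfolding normlike_def by blast

lemma nl_diff: "normlike S N \<Longrightarrow> x \<in> S \<Longrightarrow> y \<in> S \<Longrightarrow> x - y \<in> S"
  unfolding normlike_def by (simp add: subspace_diff)

lemma nl_add: "normlike S N \<Longrightarrow> x \<in> S \<Longrightarrow> y \<in> S \<Longrightarrow> x + y \<in> S"
  unfolding normlike_def by (simp add: subspace_add)

lemma nl_scale: "normlike S N \<Longrightarrow> x \<in> S \<Longrightarrow> c *\<^sub>R x \<in> S"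
  unfolding normlike_def by (simp add: subspace_scale)

lemma nl_0: "normlike S N \<Longrightarrow> 0 \<in> S"
  unfolding normlike_def by (simp add: subspace_0)

lemma nl_tri: "normlike S N \<Longrightarrow> x \<in> S \<Longrightarrow> y \<in> S \<Longrightarrow> N (x + y) \<le> N x + N y"
  unfolding normlike_def by blast

lemma nl_uminus: "normlike S N \<Longrightarrow> x \<in> S \<Longrightarrow> N (- x) = N x"
proof -
  assume a: "normlike S N" "x \<in> S"
  have "N ((-1) *\<^sub>R x) = \<bar>-1\<bar> * N x" using a unfolding normlike_def by blast
  then show ?thesis by simp
qed

lemma nl_sym: "normlike S N \<Longrightarrow> x \<in> S \<Longrightarrow> y \<in> S \<Longrightarrow> N (x - y) = N (y - x)"
  by (metis minus_diff_eq nl_diff nl_uminus)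

lemma nl_tri3: "normlike S N \<Longrightarrow> x \<in> S \<Longrightarrow> y \<in> S \<Longrightarrow> z \<in> S \<Longrightarrow> N (x - z) \<le> N (x - y) + N (y - z)"
proof -
  assume a: "normlike S N" "x \<in> S" "y \<in> S" "z \<in> S"
  have "x - z = (x - y) + (y - z)" by simp
  then show ?thesis using nl_tri[OF a(1) nl_diff[OF a(1) a(2,3)] nl_diff[OF a(1) a(3,4)]] by simp
qed

lemma contraction_iter:
  fixes S :: "'e::real_vector set" and N :: "'e \<Rightarrow> real" and T :: "'e \<Rightarrow> 'e" and r :: real
  assumes nl: "normlike S N"
    and cpl: "\<forall>s. (\<forall>k. s k \<in> S) \<and> (\<forall>e>0. \<exists>M. \<forall>i\<ge>M. \<forall>j\<ge>M. N (s i - s j) < e) \<longrightarrow> (\<exists>l\<in>S. (\<lambda>k. N (s k - l)) \<longlonglongrightarrow> 0)"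
    and Tmap: "\<And>u. u \<in> S \<Longrightarrow> N u < r \<Longrightarrow> T u \<in> S"
    and Tc: "\<And>u u'. u \<in> S \<Longrightarrow> u' \<in> S \<Longrightarrow> N u < r \<Longrightarrow> N u' < r \<Longrightarrow> N (T u - T u') \<le> 1/2 * N (u - u')"
    and r: "0 < r" and a: "N (T 0) \<le> r/4"
  shows "\<exists>l\<in>S. N l \<le> r/2 \<and> T l = l \<and> (\<lambda>k. N ((T^^k) 0 - l)) \<longlonglongrightarrow> 0 \<and> (\<forall>k. (T^^k) 0 \<in> S)"
proof -
  define s where "s k = (T^^k) 0" for k
  define a where "a = N (T 0)"
  have sS: "s (Suc k) = T (s k)" for k by (simp add: s_def)
  have S0: "0 \<in> S" using nl by (rule nl_0)
  have N0: "N 0 = 0" using nl by (rule nl_zero)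
  have T0S: "T 0 \<in> S" using Tmap[OF S0] N0 r by simp
  have a0: "0 \<le> a" unfolding a_def using nl_nonneg[OF nl T0S] .
  have inv: "s k \<in> S \<and> N (s k) \<le> r/2 \<and> N (s (Suc k) - s k) \<le> a * (1/2)^k" for k
  proof (induction k)
    case 0
    then show ?case using S0 N0 r by (simp add: s_def a_def)
  next
    case (Suc k)
    then have sk: "s k \<in> S" "N (s k) \<le> r/2" "N (s (Suc k) - s k) \<le> a * (1/2)^k" by auto
    have skr: "N (s k) < r" using sk r by linarith
    have s1: "s (Suc k) \<in> S" using Tmap[OF sk(1) skr] sS by simp
    have "N (T (s k) - 0) \<le> N (T (s k) - T 0) + N (T 0 - 0)"
      by (rule nl_tri3[OF nl Tmap[OF sk(1) skr] T0S S0])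
    also have "\<dots> \<le> 1/2 * N (s k - 0) + a"
      using Tc[OF sk(1) S0 skr] N0 r a_def by simp
    finally have n1: "N (s (Suc k)) \<le> r/2" using sk(2) a unfolding a_def sS by simp
    have s1r: "N (s (Suc k)) < r" using n1 r by linarith
    have "N (s (Suc (Suc k)) - s (Suc k)) \<le> 1/2 * N (s (Suc k) - s k)"
      unfolding sS[of "Suc k"] using Tc[OF s1 sk(1) s1r skr] by (simp add: sS)
    also have "\<dots> \<le> 1/2 * (a * (1/2)^k)" using sk(3) by simp
    finally show ?case using s1 n1 by simp
  qed
  have dist: "N (s j - s i) \<le> 2*a*(1/2)^i - 2*a*(1/2)^j" if "i \<le> j" for i j
    using that
  proof (induction j rule: dec_induct)
    case base
    then show ?case using N0 by simp
  next
    case (step n)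
    have "N (s (Suc n) - s i) \<le> N (s (Suc n) - s n) + N (s n - s i)"
      using nl_tri3[OF nl] inv by blast
    also have "\<dots> \<le> a * (1/2)^n + (2*a*(1/2)^i - 2*a*(1/2)^n)" using inv[of n] step by linarith
    finally show ?case by simp
  qed
  have dist2: "N (s i - s j) \<le> 2*a*(1/2)^(min i j)" for i j
  proof (cases "i \<le> j")
    case True
    have "N (s i - s j) = N (s j - s i)" using nl_sym[OF nl] inv by blast
    also have "\<dots> \<le> 2*a*(1/2)^i"
    proof -
      have "0 \<le> 2*a*(1/2::real)^j" using a0 by simp
      then show ?thesis using dist[OF True] by linarith
    qed
    finally show ?thesis using True by (simp add: min_def)
  next
    case False
    have "0 \<le> 2*a*(1/2::real)^i" using a0 by simp
    then have "N (s i - s j) \<le> 2*a*(1/2)^j" using dist[of j i] False by linarith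
    then show ?thesis using False by (simp add: min_def)
  qed
  have cauchy: "\<forall>e>0. \<exists>M. \<forall>i\<ge>M. \<forall>j\<ge>M. N (s i - s j) < e"
  proof (intro allI impI)
    fix e :: real assume e: "0 < e"
    obtain M where M: "(1/2::real)^M < e / (2*a+1)"
      using real_arch_pow_inv[of "e/(2*a+1)" "1/2::real"] e a0 by auto
    have "\<forall>i\<ge>M. \<forall>j\<ge>M. N (s i - s j) < e"
    proof (intro allI impI)
      fix i j assume "M \<le> i" "M \<le> j"
      then have "M \<le> min i j" by simp
      then have p: "(1/2::real)^(min i j) \<le> (1/2)^M" by (simp add: power_decreasing)
      have "N (s i - s j) \<le> 2*a*(1/2)^(min i j)" by (rule dist2)
      also have "\<dots> \<le> (2*a)*(1/2)^M" using p a0 by (simp add: mult_left_mono)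
      also have "\<dots> \<le> (2*a+1)*(1/2)^M" by (simp add: distrib_right)
      also have "\<dots> < e" using M a0 by (simp add: pos_less_divide_eq mult.commute)
      finally show "N (s i - s j) < e" .
    qed
    then show "\<exists>M. \<forall>i\<ge>M. \<forall>j\<ge>M. N (s i - s j) < e" by blast
  qed
  obtain l where lS: "l \<in> S" and lim: "(\<lambda>k. N (s k - l)) \<longlonglongrightarrow> 0"
    using cpl inv cauchy by blast
  have Nl: "N l \<le> r/2"
  proof (rule LIMSEQ_le_const)
    show "(\<lambda>k. N (s k - l) + r/2) \<longlonglongrightarrow> r/2" using tendsto_add[OF lim tendsto_const, of "r/2"] by simp
    have "N l \<le> N (s k - l) + r/2" for k
    proof -
      have "N (l - 0) \<le> N (l - s k) + N (s k - 0)" using nl_tri3[OF nl lS _ S0] inv by blast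
      moreover have "N (l - s k) = N (s k - l)" using nl_sym[OF nl lS, of "s k"] inv by blast
      moreover have "N (s k) \<le> r/2" using inv by blast
      ultimately show ?thesis by simp
    qed
    then show "\<exists>N'. \<forall>n\<ge>N'. N l \<le> N (s n - l) + r/2" by blast
  qed
  have lr: "N l < r" using Nl r by linarith
  have TlS: "T l \<in> S" using Tmap[OF lS lr] .
  have fix0: "N (T l - l) \<le> 0"
  proof (rule LIMSEQ_le_const)
    have "(\<lambda>k. N (s (Suc k) - l)) \<longlonglongrightarrow> 0" using lim by (rule LIMSEQ_Suc)
    then show "(\<lambda>k. 1/2 * N (s k - l) + N (s (Suc k) - l)) \<longlonglongrightarrow> 0"
      using tendsto_add[OF tendsto_mult[OF tendsto_const lim], of "\<lambda>k. N (s (Suc k) - l)" 0 "1/2"] by simp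
    have "N (T l - l) \<le> 1/2 * N (s k - l) + N (s (Suc k) - l)" for k
    proof -
      have skS: "s k \<in> S" and skr: "N (s k) < r" using inv[of k] r by auto
      have "N (T l - l) \<le> N (T l - s (Suc k)) + N (s (Suc k) - l)"
        using nl_tri3[OF nl TlS _ lS] inv by blast
      also have "N (T l - s (Suc k)) = N (T (s k) - T l)"
        unfolding sS using nl_sym[OF nl TlS Tmap[OF skS skr]] by simp
      also have "\<dots> \<le> 1/2 * N (s k - l)" using Tc[OF skS lS skr lr] .
      finally show ?thesis by simp
    qed
    then show "\<exists>N'. \<forall>n\<ge>N'. N (T l - l) \<le> 1/2 * N (s n - l) + N (s (Suc n) - l)" by blast
  qed
  have "T l - l = 0" using nl_eq0[OF nl nl_diff[OF nl TlS lS]] nl_nonneg[OF nl nl_diff[OF nl TlS lS]] fix0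
    by linarith
  then have Tl: "T l = l" by simp
  have allS: "\<forall>k. (T^^k) 0 \<in> S" using inv unfolding s_def by blast
  have lim': "(\<lambda>k. N ((T^^k) 0 - l)) \<longlonglongrightarrow> 0" using lim unfolding s_def .
  show ?thesis
    apply (rule bexI[where x=l])
     apply (intro conjI)
        apply (rule Nl)
       apply (rule Tl)
      apply (rule lim')
     apply (rule allS)
    apply (rule lS)
    done
qed

lemma norm_lim: "(\<lambda>k. norm (x k - l)) \<longlonglongrightarrow> 0 \<Longrightarrow> x \<longlonglongrightarrow> l"
proof -
  assume a: "(\<lambda>k. norm (x k - l)) \<longlonglongrightarrow> 0"
  have "(\<lambda>k. x k - l) \<longlonglongrightarrow> 0" using a tendsto_norm_zero_iff[of "\<lambda>k. x k - l" sequentially] by simp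
  then show ?thesis using LIM_zero_iff[of x l sequentially] by simp
qed

lemma sc_El0:
  fixes El :: "nat \<Rightarrow> 'e::banach set"
  assumes "sc_banach El nm"
  shows "El 0 = UNIV"
  using assms unfolding sc_banach_def by (elim conjE) assumption

lemma sc_nm0:
  fixes El :: "nat \<Rightarrow> 'e::banach set"
  assumes "sc_banach El nm"
  shows "\<forall>x. nm 0 x = norm x"
  using assms unfolding sc_banach_def by (elim conjE) assumption

lemma sc_sub:
  fixes El :: "nat \<Rightarrow> 'e::banach set"
  assumes "sc_banach El nm"
  shows "\<forall>m. subspace (El m)"
  using assms unfolding sc_banach_def by (elim conjE) assumption

lemma sc_pos:
  fixes El :: "nat \<Rightarrow> 'e::banach set"
  assumes "sc_banach El nm"
  shows "\<forall>m. \<forall>x\<in>El m. 0 \<le> nm m x \<and> (nm m x = 0 \<longleftrightarrow> x = 0)"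
  using assms unfolding sc_banach_def by (elim conjE) assumption

lemma sc_tri:
  fixes El :: "nat \<Rightarrow> 'e::banach set"
  assumes "sc_banach El nm"
  shows "\<forall>m. \<forall>x\<in>El m. \<forall>y\<in>El m. nm m (x + y) \<le> nm m x + nm m y"
  using assms unfolding sc_banach_def by (elim conjE) assumption

lemma sc_hom:
  fixes El :: "nat \<Rightarrow> 'e::banach set"
  assumes "sc_banach El nm"
  shows "\<forall>m. \<forall>x\<in>El m. \<forall>c::real. nm m (c *\<^sub>R x) = \<bar>c\<bar> * nm m x"
  using assms unfolding sc_banach_def by (elim conjE) assumption

lemma sc_cpl:
  fixes El :: "nat \<Rightarrow> 'e::banach set"
  assumes "sc_banach El nm"
  shows "\<forall>m (s::nat \<Rightarrow> 'e). (\<forall>k. s k \<in> El m) \<and> (\<forall>e>0. \<exists>N. \<forall>i\<ge>N. \<forall>j\<ge>N. nm m (s i - s j) < e) \<longrightarrow> (\<exists>l\<in>El m. (\<lambda>k. nm m (s k - l)) \<longlonglongrightarrow> 0)"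
  using assms unfolding sc_banach_def by (elim conjE) assumption

lemma sc_comp:
  fixes El :: "nat \<Rightarrow> 'e::banach set"
  assumes "sc_banach El nm"
  shows "\<forall>m n (s::nat \<Rightarrow> 'e). m < n \<and> (\<forall>k. s k \<in> El n) \<and> (\<exists>M. \<forall>k. nm n (s k) \<le> M) \<longrightarrow> (\<exists>(r::nat \<Rightarrow> nat) l. strict_mono r \<and> l \<in> El m \<and> (\<lambda>k. nm m (s (r k) - l)) \<longlonglongrightarrow> 0)"
  using assms unfolding sc_banach_def by (elim conjE) assumption

lemma sc_nl: "sc_banach El nm \<Longrightarrow> normlike (El m) (nm m)"
  unfolding normlike_def using sc_sub sc_pos sc_tri sc_hom by metis

lemma incl_bound:
  assumes sc: "sc_banach El nm"
  shows "\<exists>C. \<forall>x\<in>El m. nm 0 x \<le> C * nm m x"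
proof (cases "m = 0")
  case True
  then show ?thesis by (rule_tac x=1 in exI) simp
next
  case False
  have nm0: "\<And>x. nm 0 x = norm x" using sc_nm0[OF sc] by blast
  have nl: "normlike (El m) (nm m)" using sc by (rule sc_nl)
  have comp: "\<And>s::nat\<Rightarrow>_. (\<forall>k. s k \<in> El m) \<Longrightarrow> (\<exists>M. \<forall>k. nm m (s k) \<le> M)
      \<Longrightarrow> (\<exists>(r::nat \<Rightarrow> nat) l. strict_mono r \<and> l \<in> El 0 \<and> (\<lambda>k. nm 0 (s (r k) - l)) \<longlonglongrightarrow> 0)"
    using sc_comp[OF sc] False by blast
  show ?thesis
  proof (rule ccontr)
    assume "\<not> ?thesis"
    then have "\<forall>k::nat. \<exists>x\<in>El m. nm 0 x > real k * nm m x" by (meson not_le)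
    then have "\<forall>k::nat. \<exists>x. x \<in> El m \<and> nm 0 x > real k * nm m x" by blast
    from choice[OF this] obtain x where x0: "\<forall>k. x k \<in> El m \<and> nm 0 (x k) > real k * nm m (x k)" by blast
    then have x: "\<And>k. x k \<in> El m" "\<And>k. nm 0 (x k) > real k * nm m (x k)" by auto
    have pos: "nm m (x k) > 0" for k
    proof -
      have "x k \<noteq> 0" using x(2)[of k] nm0 nl_zero[OF nl] by auto
      then show ?thesis using nl_nonneg[OF nl x(1)[of k]] nl_eq0[OF nl x(1)[of k]] by force
    qed
    define y where "y k = (1 / nm m (x k)) *\<^sub>R x k" for k
    have yS: "y k \<in> El m" for k unfolding y_def by (rule nl_scale[OF nl x(1)])
    have y1: "nm m (y k) = 1" for k
      using nl x(1)[of k] pos[of k] unfolding y_def normlike_def by auto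
    have yb: "norm (y k) > real k" for k
    proof -
      have "norm (y k) = norm (x k) / nm m (x k)" unfolding y_def using pos[of k] by simp
      also have "\<dots> > real k" using x(2)[of k] pos[of k] nm0 by (simp add: pos_less_divide_eq)
      finally show ?thesis .
    qed
    obtain r l where r: "strict_mono r" and lim: "(\<lambda>k. nm 0 (y (r k) - l)) \<longlonglongrightarrow> 0"
    proof -
      have "\<exists>M. \<forall>k. nm m (y k) \<le> M" using y1 by auto
      then show ?thesis using comp[of y] yS that by blast
    qed
    have "(\<lambda>k. norm (y (r k) - l)) \<longlonglongrightarrow> 0" using lim unfolding nm0 .
    then have "(\<lambda>k. y (r k)) \<longlonglongrightarrow> l" by (rule norm_lim[of "\<lambda>k. y (r k)"])
    then have "Bseq (\<lambda>k. y (r k))" by (rule convergent_imp_Bseq[OF convergentI])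
    then obtain K where "0 < K" and K0: "\<forall>k. norm (y (r k)) \<le> K" by (rule BseqE)
    then have K: "\<And>k. norm (y (r k)) \<le> K" by blast
    obtain k :: nat where k: "K < real k" using reals_Archimedean2 by blast
    have "real k \<le> real (r k)" using seq_suble[OF r] by simp
    then show False using yb[of "r k"] K[of k] k by linarith
  qed
qed



lemma quad0: "partial_quadrant V \<Longrightarrow> (0::'v::euclidean_space) \<in> V"
  unfolding partial_quadrant_def
proof (elim exE conjE)
  fix L B assume L: "linear (L::'v\<Rightarrow>'v)" and V: "V = L ` {x. \<forall>b\<in>B. 0 \<le> x \<bullet> b}"
  have "(0::'v) \<in> {x. \<forall>b\<in>B. 0 \<le> x \<bullet> b}" by simp
  then have "L 0 \<in> V" unfolding V by blast
  then show "0 \<in> V" using linear_0[OF L] by simp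
qed

lemma ball_nbhd:
  fixes V :: "'v::real_normed_vector set"
  assumes "0 \<in> V" "0 < t"
  shows "rel_open_nbhd0 V norm {v\<in>V. norm v < t}"
  unfolding rel_open_nbhd0_def
proof (intro conjI ballI)
  show "{v \<in> V. norm v < t} \<subseteq> V" by blast
  show "0 \<in> {v \<in> V. norm v < t}" using assms by simp
  fix x assume x: "x \<in> {v \<in> V. norm v < t}"
  show "\<exists>e>0. \<forall>y\<in>V. norm (y - x) < e \<longrightarrow> y \<in> {v \<in> V. norm v < t}"
  proof (intro exI[of _ "t - norm x"] conjI ballI impI)
    show "0 < t - norm x" using x by simp
    fix y assume "y \<in> V" "norm (y - x) < t - norm x"
    moreover have "norm y \<le> norm x + norm (y - x)" using norm_triangle_sub[of y x] by simp
    ultimately show "y \<in> {v \<in> V. norm v < t}" by simp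
  qed
qed

theorem theorem2p2:
  fixes El :: "nat \<Rightarrow> 'e::banach set" and nm :: "nat \<Rightarrow> 'e \<Rightarrow> real"
    and V :: "'v::euclidean_space set"
    and Uf :: "nat \<Rightarrow> ('v \<times> 'e) set" and f :: "'v \<times> 'e \<Rightarrow> 'e"
  assumes "sc_banach El nm"
    and "partial_quadrant V"
    and "sc0_contraction_germ V El nm Uf f"
  shows "\<exists>Ud d. sc0_germ (\<lambda>_. V) (\<lambda>_. norm) El nm Ud d \<and> solves_germ V Uf f Ud d \<and>
           (\<forall>Ud' d'. sc0_germ (\<lambda>_. V) (\<lambda>_. norm) El nm Ud' d' \<and> solves_germ V Uf f Ud' d'
                \<longrightarrow> germ_eq V Ud d Ud' d')"
proof -
  note sc = assms(1)
  have nm0: "\<And>x. nm 0 x = norm x" using sc_nm0[OF sc] by blast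
  have nl: "\<And>m. normlike (El m) (nm m)" using sc_nl[OF sc] .
  have cpl: "\<And>m. \<forall>s. (\<forall>k. s k \<in> El m) \<and> (\<forall>e>0. \<exists>M. \<forall>i\<ge>M. \<forall>j\<ge>M. nm m (s i - s j) < e)
       \<longrightarrow> (\<exists>l\<in>El m. (\<lambda>k. nm m (s k - l)) \<longlonglongrightarrow> 0)" using sc_cpl[OF sc] by blast
  have V0: "0 \<in> V" by (rule quad0[OF assms(2)])
  have germ: "sc0_germ (sum_levels V El) (sum_norms nm) El nm Uf f"
    using assms(3) unfolding sc0_contraction_germ_def by (elim conjE) assumption
  have ctr: "\<forall>m. \<forall>\<epsilon>::real. 0 < \<epsilon> \<and> \<epsilon> < 1 \<longrightarrow>
        (\<exists>r>0. \<forall>v\<in>V. \<forall>u\<in>El m. \<forall>u'\<in>El m.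
            norm v < r \<and> nm m u < r \<and> nm m u' < r \<longrightarrow>
            (v, u) \<in> Uf m \<and> (v, u') \<in> Uf m \<and>
            nm m ((u - f (v, u)) - (u' - f (v, u'))) \<le> \<epsilon> * nm m (u - u'))"
    using assms(3) unfolding sc0_contraction_germ_def by (elim conjE) assumption
  have Ufn: "\<And>m. rel_open_nbhd0 (V \<times> El m) (sum_norms nm m) (Uf m)"
    using germ unfolding sc0_germ_def sum_levels_def by blast
  have f0: "f 0 = 0" using germ unfolding sc0_germ_def by blast
  have fEl: "\<And>m. f ` Uf m \<subseteq> El m" using germ unfolding sc0_germ_def by blast
  have fc: "\<And>m. cont_lev (Uf m) (sum_norms nm m) (nm m) f" using germ unfolding sc0_germ_def by blast
  have f00: "f (0,0) = 0" using f0 by (simp add: zero_prod_def)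
  have Uf0: "\<And>m. 0 \<in> Uf m" using Ufn unfolding rel_open_nbhd0_def by blast
  define REG where "REG m r \<longleftrightarrow> (\<forall>v\<in>V. \<forall>u\<in>El m. \<forall>u'\<in>El m.
            norm v < r \<and> nm m u < r \<and> nm m u' < r \<longrightarrow>
            (v, u) \<in> Uf m \<and> (v, u') \<in> Uf m \<and>
            nm m ((u - f (v, u)) - (u' - f (v, u'))) \<le> 1/2 * nm m (u - u'))" for m r
  have regD: "(v,u) \<in> Uf m \<and> (v,u') \<in> Uf m \<and> nm m ((u - f (v, u)) - (u' - f (v, u'))) \<le> 1/2 * nm m (u - u')"
    if "REG m r" "v \<in> V" "u \<in> El m" "u' \<in> El m" "norm v < r" "nm m u < r" "nm m u' < r" for m r v u u'
    using that unfolding REG_def by blast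
  have regex: "\<exists>r>0. REG m r" for m
  proof -
    have "0 < (1/2::real) \<and> (1/2::real) < 1 \<longrightarrow> (\<exists>r>0. \<forall>v\<in>V. \<forall>u\<in>El m. \<forall>u'\<in>El m.
            norm v < r \<and> nm m u < r \<and> nm m u' < r \<longrightarrow>
            (v, u) \<in> Uf m \<and> (v, u') \<in> Uf m \<and>
            nm m ((u - f (v, u)) - (u' - f (v, u'))) \<le> 1/2 * nm m (u - u'))"
      by (rule spec[OF spec[OF ctr, of m], of "1/2"])
    then show ?thesis unfolding REG_def by simp
  qed
  define it where "it v k = ((\<lambda>u. u - f (v,u)) ^^ k) 0" for v k
  have itS: "it v (Suc k) = it v k - f (v, it v k)" for v k by (simp add: it_def)
  define GOOD where "GOOD m r \<rho> \<longleftrightarrow> 0 < r \<and> 0 < \<rho> \<and> \<rho> \<le> r \<and> REG m r \<and>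
      (\<forall>v\<in>V. norm v < \<rho> \<longrightarrow> (\<exists>l\<in>El m. nm m l \<le> r/2 \<and> f (v,l) = 0 \<and>
         (\<lambda>k. nm m (it v k - l)) \<longlonglongrightarrow> 0 \<and> (\<forall>k. it v k \<in> El m)))" for m r \<rho>
  have lev: "\<exists>r \<rho>. GOOD m r \<rho>" for m
  proof -
    obtain r where r: "0 < r" "REG m r" using regex by blast
    have r4: "0 < r/4" using r by simp
    obtain \<delta> where \<delta>: "0 < \<delta>" "\<forall>y\<in>Uf m. sum_norms nm m (y - 0) < \<delta> \<longrightarrow> nm m (f y - f 0) < r/4"
      using fc[of m] Uf0[of m] r4 unfolding cont_lev_def by blast
    have Z: "0 \<in> El m" "nm m 0 = 0" using nl_0[OF nl] nl_zero[OF nl] by auto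
    have "GOOD m r (min r \<delta>)"
      unfolding GOOD_def
    proof (intro conjI ballI impI)
      show "0 < r" "0 < min r \<delta>" "min r \<delta> \<le> r" "REG m r" using r \<delta> by auto
      fix v assume v: "v \<in> V" "norm v < min r \<delta>"
      have Tmap: "u - f (v,u) \<in> El m" if "u \<in> El m" "nm m u < r" for u
      proof -
        have "(v,u) \<in> Uf m" using regD[OF r(2) v(1) that(1) that(1)] v that by simp
        then have "f (v,u) \<in> El m" using fEl by blast
        then show ?thesis using nl_diff[OF nl that(1)] by blast
      qed
      have Tc: "nm m ((u - f (v,u)) - (u' - f (v,u'))) \<le> 1/2 * nm m (u - u')"
        if "u \<in> El m" "u' \<in> El m" "nm m u < r" "nm m u' < r" for u u'
        using regD[OF r(2) v(1) that(1,2)] v that by simp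
      have v0: "(v,0) \<in> Uf m" using regD[OF r(2) v(1) Z(1) Z(1)] v Z r by simp
      have "sum_norms nm m ((v,0) - 0) = norm v" using Z unfolding sum_norms_def by simp
      then have "nm m (f (v,0) - f 0) < r/4" using \<delta>(2) v0 v by simp
      then have fv0: "nm m (f (v,0)) < r/4" using f0 by simp
      have fv0S: "f (v,0) \<in> El m" using v0 fEl by blast
      have a: "nm m (0 - f (v,0)) \<le> r/4" using nl_uminus[OF nl fv0S] fv0 by simp
      obtain l where l: "l \<in> El m" "nm m l \<le> r/2" "l - f (v,l) = l"
        "(\<lambda>k. nm m (((\<lambda>u. u - f (v,u))^^k) 0 - l)) \<longlonglongrightarrow> 0" "\<forall>k. ((\<lambda>u. u - f (v,u))^^k) 0 \<in> El m"
        using contraction_iter[OF nl cpl, where T="\<lambda>u. u - f (v,u)" and r=r] Tmap Tc r(1) a by blast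
      show "\<exists>l\<in>El m. nm m l \<le> r/2 \<and> f (v,l) = 0 \<and> (\<lambda>k. nm m (it v k - l)) \<longlonglongrightarrow> 0 \<and> (\<forall>k. it v k \<in> El m)"
        using l unfolding it_def by auto
    qed
    then show ?thesis by blast
  qed
  have "\<forall>m. \<exists>r. \<exists>\<rho>. GOOD m r \<rho>" using lev by blast
  then obtain r where "\<forall>m. \<exists>\<rho>. GOOD m (r m) \<rho>" by (rule choice[THEN exE]) blast
  then obtain \<rho> where G: "\<forall>m. GOOD m (r m) (\<rho> m)" by (rule choice[THEN exE]) blast
  have rpos: "\<And>m. 0 < r m" and \<rho>pos: "\<And>m. 0 < \<rho> m" and \<rho>r: "\<And>m. \<rho> m \<le> r m"
    and reg: "\<And>m. REG m (r m)" using G unfolding GOOD_def by auto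
  have sol: "\<And>m v. v \<in> V \<Longrightarrow> norm v < \<rho> m \<Longrightarrow> \<exists>l\<in>El m. nm m l \<le> r m/2 \<and> f (v,l) = 0 \<and>
         (\<lambda>k. nm m (it v k - l)) \<longlonglongrightarrow> 0 \<and> (\<forall>k. it v k \<in> El m)"
    using G unfolding GOOD_def by blast
  define d where "d v = lim (it v)" for v
  have key: "d v \<in> El m \<and> nm m (d v) \<le> r m / 2 \<and> f (v, d v) = 0"
    if v: "v \<in> V" "norm v < \<rho> 0" "norm v < \<rho> m" for v m
  proof -
    obtain l0 where l0: "l0 \<in> El 0" "(\<lambda>k. nm 0 (it v k - l0)) \<longlonglongrightarrow> 0"
      using sol[OF v(1,2)] by blast
    obtain lm where lm: "lm \<in> El m" "nm m lm \<le> r m/2" "f (v,lm) = 0"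
       "(\<lambda>k. nm m (it v k - lm)) \<longlonglongrightarrow> 0" "\<forall>k. it v k \<in> El m"
      using sol[OF v(1,3)] by blast
    have "(\<lambda>k. norm (it v k - l0)) \<longlonglongrightarrow> 0" using l0(2) unfolding nm0 .
    then have t0: "it v \<longlonglongrightarrow> l0" by (rule norm_lim)
    then have dv: "d v = l0" unfolding d_def by (rule limI)
    obtain C where C: "\<forall>x\<in>El m. nm 0 x \<le> C * nm m x" using incl_bound[OF sc] by blast
    have "(\<lambda>k. it v k - lm) \<longlonglongrightarrow> 0"
    proof (rule Lim_null_comparison)
      show "\<forall>\<^sub>F k in sequentially. norm (it v k - lm) \<le> C * nm m (it v k - lm)"
        using C nl_diff[OF nl] lm(1,5) nm0 by (simp add: always_eventually)
      show "(\<lambda>k. C * nm m (it v k - lm)) \<longlonglongrightarrow> 0"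
        using tendsto_mult[OF tendsto_const[of C] lm(4)] by simp
    qed
    then have "it v \<longlonglongrightarrow> lm" using LIM_zero_iff[of "it v" lm sequentially] by simp
    then have "lm = l0" using t0 by (rule LIMSEQ_unique)
    then show ?thesis using lm dv by simp
  qed
  define s where "s = rec_nat (\<rho> 0) (\<lambda>m x. min x (\<rho> (Suc m)))"
  have s0: "s 0 = \<rho> 0" and sS: "\<And>m. s (Suc m) = min (s m) (\<rho> (Suc m))" by (simp_all add: s_def)
  have sprop: "0 < s m \<and> s m \<le> \<rho> m \<and> s m \<le> \<rho> 0" for m
  proof (induction m)
    case 0 then show ?case using s0 \<rho>pos by simp
  next
    case (Suc m) then show ?case using sS[of m] \<rho>pos[of "Suc m"] by auto
  qed
  define Ud where "Ud m = {v\<in>V. norm v < s m}" for m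
  have inUd: "d v \<in> El m \<and> nm m (d v) \<le> r m / 2 \<and> f (v, d v) = 0 \<and> v \<in> V \<and> norm v < r m"
    if "v \<in> Ud m" for v m
  proof -
    have v: "v \<in> V" "norm v < s m" using that unfolding Ud_def by auto
    then have "norm v < \<rho> 0" "norm v < \<rho> m" using sprop[of m] by auto
    then show ?thesis using key[OF v(1)] v \<rho>r[of m] by force
  qed
  have Udn: "rel_open_nbhd0 V norm (Ud m)" for m
    unfolding Ud_def using ball_nbhd[OF V0] sprop by blast
  have it0: "it 0 k = 0" for k
    by (induction k) (simp_all add: itS f00, simp add: it_def)
  have "it 0 = (\<lambda>k. 0)" using it0 by (rule ext)
  then have d0: "d 0 = 0" unfolding d_def by (simp add: limI)
  have S1: "sc0_germ (\<lambda>_. V) (\<lambda>_. norm) El nm Ud d"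
    unfolding sc0_germ_def
  proof (intro conjI allI)
    show "rel_open_nbhd0 V norm (Ud m)" for m by (rule Udn)
    show "Ud (Suc m) \<subseteq> Ud m" for m unfolding Ud_def using sS[of m] by auto
    show "d 0 = 0" by (rule d0)
    show "d ` Ud m \<subseteq> El m" for m using inUd by blast
    show "cont_lev (Ud m) norm (nm m) d" for m
      unfolding cont_lev_def
    proof (intro ballI allI impI)
      fix x e assume x: "x \<in> Ud m" and e: "(0::real) < e"
      have X: "d x \<in> El m" "nm m (d x) \<le> r m/2" "f (x, d x) = 0" "x \<in> V" "norm x < r m"
        using inUd[OF x] by auto
      have dxr: "nm m (d x) < r m" using X(2) rpos[of m] by linarith
      have xU: "(x, d x) \<in> Uf m" using regD[OF reg X(4) X(1) X(1) X(5) dxr dxr] by simp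
      have e2: "0 < e/2" using e by simp
      obtain \<delta> where \<delta>: "0 < \<delta>" "\<forall>y\<in>Uf m. sum_norms nm m (y - (x, d x)) < \<delta> \<longrightarrow> nm m (f y - f (x, d x)) < e/2"
        using fc[of m] xU e2 unfolding cont_lev_def by blast
      show "\<exists>\<delta>>0. \<forall>y\<in>Ud m. norm (y - x) < \<delta> \<longrightarrow> nm m (d y - d x) < e"
      proof (intro exI[of _ \<delta>] conjI ballI impI)
        show "0 < \<delta>" by (rule \<delta>(1))
        fix y assume y: "y \<in> Ud m" and yd: "norm (y - x) < \<delta>"
        have Y: "d y \<in> El m" "nm m (d y) \<le> r m/2" "f (y, d y) = 0" "y \<in> V" "norm y < r m"
          using inUd[OF y] by auto
        have dyr: "nm m (d y) < r m" using Y(2) rpos[of m] by linarith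
        have R: "(y, d x) \<in> Uf m" "nm m ((d y - f (y, d y)) - (d x - f (y, d x))) \<le> 1/2 * nm m (d y - d x)"
          using regD[OF reg Y(4) Y(1) X(1) Y(5) dyr dxr] by auto
        have "sum_norms nm m ((y, d x) - (x, d x)) = norm (y - x)"
          unfolding sum_norms_def using nl_zero[OF nl] by simp
        then have "nm m (f (y, d x) - f (x, d x)) < e/2" using \<delta>(2) R(1) yd by simp
        then have fy: "nm m (f (y, d x)) < e/2" using X(3) by simp
        have fyS: "f (y, d x) \<in> El m" using R(1) fEl by blast
        define A where "A = d y - (d x - f (y, d x))"
        have AS: "A \<in> El m" unfolding A_def using nl_diff[OF nl Y(1) nl_diff[OF nl X(1) fyS]] .
        have A: "nm m A \<le> 1/2 * nm m (d y - d x)" using R(2) Y(3) unfolding A_def by simp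
        have "d y - d x = A + (- f (y, d x))" unfolding A_def by simp
        then have "nm m (d y - d x) \<le> nm m A + nm m (- f (y, d x))"
          using nl_tri[OF nl AS nl_scale[OF nl fyS, of "-1"]] by simp
        then have "nm m (d y - d x) \<le> nm m A + nm m (f (y, d x))" using nl_uminus[OF nl fyS] by simp
        then show "nm m (d y - d x) < e" using A fy by linarith
      qed
    qed
  qed
  have S2: "solves_germ V Uf f Ud d"
    unfolding solves_germ_def
  proof (intro exI[of _ "Ud 0"] conjI ballI)
    show "rel_open_nbhd0 V norm (Ud 0)" by (rule Udn)
    show "Ud 0 \<subseteq> Ud 0" by simp
    fix v assume v: "v \<in> Ud 0"
    have X: "d v \<in> El 0" "nm 0 (d v) \<le> r 0/2" "f (v, d v) = 0" "v \<in> V" "norm v < r 0"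
      using inUd[OF v] by auto
    have dxr: "nm 0 (d v) < r 0" using X(2) rpos[of 0] by linarith
    show "(v, d v) \<in> Uf 0" using regD[OF reg X(4) X(1) X(1) X(5) dxr dxr] by simp
    show "f (v, d v) = 0" by (rule X(3))
  qed
  have S3: "germ_eq V Ud d Ud' d'"
    if H: "sc0_germ (\<lambda>_. V) (\<lambda>_. norm) El nm Ud' d'" "solves_germ V Uf f Ud' d'" for Ud' d'
  proof -
    have U'n: "rel_open_nbhd0 V norm (Ud' 0)" and d'0: "d' 0 = 0"
      and d'c: "cont_lev (Ud' 0) norm (nm 0) d'" using H(1) unfolding sc0_germ_def by auto
    obtain W' where W': "rel_open_nbhd0 V norm W'" "\<forall>v\<in>W'. (v, d' v) \<in> Uf 0 \<and> f (v, d' v) = 0"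
      using H(2) unfolding solves_germ_def by blast
    have r2: "0 < r 0 / 2" using rpos[of 0] by simp
    have "0 \<in> Ud' 0" using U'n unfolding rel_open_nbhd0_def by blast
    then obtain \<delta> where \<delta>: "0 < \<delta>" "\<forall>y\<in>Ud' 0. norm (y - 0) < \<delta> \<longrightarrow> nm 0 (d' y - d' 0) < r 0 / 2"
      using d'c r2 unfolding cont_lev_def by blast
    obtain e1 where e1: "0 < e1" "\<forall>y\<in>V. norm (y - 0) < e1 \<longrightarrow> y \<in> Ud' 0"
      using U'n `0 \<in> Ud' 0` unfolding rel_open_nbhd0_def by blast
    have "0 \<in> W'" using W'(1) unfolding rel_open_nbhd0_def by blast
    then obtain e2 where e2: "0 < e2" "\<forall>y\<in>V. norm (y - 0) < e2 \<longrightarrow> y \<in> W'"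
      using W'(1) unfolding rel_open_nbhd0_def by blast
    define t where "t = min (min (s 0) \<delta>) (min e1 e2)"
    have tpos: "0 < t" unfolding t_def using sprop[of 0] \<delta>(1) e1(1) e2(1) by simp
    show ?thesis
      unfolding germ_eq_def
    proof (intro exI[of _ "{v\<in>V. norm v < t}"] conjI ballI)
      show "rel_open_nbhd0 V norm {v\<in>V. norm v < t}" by (rule ball_nbhd[OF V0 tpos])
      show "{v\<in>V. norm v < t} \<subseteq> Ud 0" unfolding Ud_def t_def by auto
      show "{v\<in>V. norm v < t} \<subseteq> Ud' 0" using e1 unfolding t_def by auto
      fix v assume v: "v \<in> {v\<in>V. norm v < t}"
      have vV: "v \<in> V" and vt: "norm v < t" using v by auto
      have vU: "v \<in> Ud 0" using v unfolding Ud_def t_def by auto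
      have vU': "v \<in> Ud' 0" using e1 vV vt unfolding t_def by auto
      have vW: "v \<in> W'" using e2 vV vt unfolding t_def by auto
      have X: "f (v, d v) = 0" "norm (d v) \<le> r 0/2" "norm v < r 0"
        using inUd[OF vU] nm0 by auto
      have f': "f (v, d' v) = 0" using W'(2) vW by blast
      have "nm 0 (d' v - d' 0) < r 0 / 2" using \<delta>(2) vU' vt unfolding t_def by auto
      then have "norm (d' v) < r 0 / 2" using d'0 nm0 by simp
      then have nd': "norm (d' v) < r 0" using rpos[of 0] by linarith
      have ndv: "norm (d v) < r 0" using X(2) rpos[of 0] by linarith
      have "nm 0 ((d v - f (v, d v)) - (d' v - f (v, d' v))) \<le> 1/2 * nm 0 (d v - d' v)"
        using regD[OF reg vV, where u="d v" and u'="d' v" and m=0] sc_El0[OF sc] X(3) ndv nd' nm0 by simp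
      then have "norm (d v - d' v) \<le> 1/2 * norm (d v - d' v)" using X(1) f' nm0 by simp
      then have "norm (d v - d' v) = 0" using norm_ge_zero[of "d v - d' v"] by linarith
      then show "d v = d' v" by simp
    qed
  qed
  show ?thesis using S1 S2 S3 by blast
qed


end
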